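(* Let $B$ and $C$ be sets and let $s,t:B\to C$ be bijections such that $s(a)\neq t(a)$ for all $a\in B$. Then there is a decomposition of $B$ into three pairwise disjoint subsets $B=B_0\sqcup B_1\sqcup B_2$ such that $s(B_i)\cap t(B_i)=\varnothing$ for each $i\in\{0,1,2\}$. *)

theory Defs
  imports Main
begin

end

theory Submission
  imports Defs
begin

theorem lemma3p5:
  fixes B :: "'a set" and C :: "'b set" and s t :: "'a \<Rightarrow> 'b"
  assumes "bij_betw s B C" and "bij_betw t B C"
    and "\<And>a. a \<in> B \<Longrightarrow> s a \<noteq> t a"
  shows "\<exists>B0 B1 B2. B = B0 \<union> B1 \<union> B2
           \<and> B0 \<inter> B1 = {} \<and> B0 \<inter> B2 = {} \<and> B1 \<inter> B2 = {}
           \<and> s ` B0 \<inter> t ` B0 = {} \<and> s ` B1 \<inter> t ` B1 = {}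
           \<and> s ` B2 \<inter> t ` B2 = {}"
proof -
  have injs: "inj_on s B" and injt: "inj_on t B" using assms(1,2) bij_betw_def by auto
  define A where "A = {P. P \<subseteq> B \<times> {0,1,2::nat}
      \<and> (\<forall>a i j. (a,i)\<in>P \<longrightarrow> (a,j)\<in>P \<longrightarrow> i = j)
      \<and> (\<forall>a b i. (a,i)\<in>P \<longrightarrow> (b,i)\<in>P \<longrightarrow> s a \<noteq> t b)}"
  have "\<forall>Ch\<in>chains A. \<Union>Ch \<in> A"
  proof
    fix Ch assume ch: "Ch \<in> chains A"
    hence sub: "Ch \<subseteq> A" and lin: "\<And>X Y. X \<in> Ch \<Longrightarrow> Y \<in> Ch \<Longrightarrow> X \<subseteq> Y \<or> Y \<subseteq> X"
      unfolding chains_def chain_subset_def by auto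
    have two: "\<exists>P\<in>Ch. x \<in> P \<and> y \<in> P" if hx: "x \<in> \<Union>Ch" and hy: "y \<in> \<Union>Ch" for x y
    proof -
      obtain X Y where "X \<in> Ch" "Y \<in> Ch" "x \<in> X" "y \<in> Y" using hx hy by (meson UnionE)
      thus ?thesis using lin[of X Y] by blast
    qed
    show "\<Union>Ch \<in> A"
      unfolding A_def
    proof (intro CollectI conjI allI impI)
      show "\<Union>Ch \<subseteq> B \<times> {0,1,2}" using sub unfolding A_def by blast
    next
      fix a i j assume h: "(a,i) \<in> \<Union>Ch" "(a,j) \<in> \<Union>Ch"
      then obtain P where "P \<in> Ch" "(a,i)\<in>P" "(a,j)\<in>P" using two by blast
      thus "i = j" using sub unfolding A_def by blast
    next
      fix a b i assume h: "(a,i) \<in> \<Union>Ch" "(b,i) \<in> \<Union>Ch"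
      then obtain P where "P \<in> Ch" "(a,i)\<in>P" "(b,i)\<in>P" using two by blast
      thus "s a \<noteq> t b" using sub unfolding A_def by blast
    qed
  qed
  then obtain M where MA: "M \<in> A" and Mmax: "\<And>X. X \<in> A \<Longrightarrow> M \<subseteq> X \<Longrightarrow> X = M"
    using Zorn_Lemma[of A] by blast
  have Msub: "M \<subseteq> B \<times> {0,1,2}"
    and Mfun: "\<And>a i j. (a,i)\<in>M \<Longrightarrow> (a,j)\<in>M \<Longrightarrow> i = j"
    and Mprop: "\<And>a b i. (a,i)\<in>M \<Longrightarrow> (b,i)\<in>M \<Longrightarrow> s a \<noteq> t b"
    using MA unfolding A_def by blast+
  have total: "\<exists>i. (a,i) \<in> M" if aB: "a \<in> B" for a
  proof (rule ccontr)
    assume nc: "\<not> (\<exists>i. (a,i) \<in> M)"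
    define F where "F = {i. \<exists>b. (b,i)\<in>M \<and> (s a = t b \<or> s b = t a)}"
    have "\<exists>i\<in>{0,1,2::nat}. i \<notin> F"
    proof (rule ccontr)
      assume "\<not> ?thesis"
      then obtain b0 b1 b2 where
        b0: "(b0,0)\<in>M" "s a = t b0 \<or> s b0 = t a" and
        b1: "(b1,1)\<in>M" "s a = t b1 \<or> s b1 = t a" and
        b2: "(b2,2)\<in>M" "s a = t b2 \<or> s b2 = t a"
        unfolding F_def by auto
      have inB: "b0 \<in> B" "b1 \<in> B" "b2 \<in> B" using b0 b1 b2 Msub by auto
      have eq: "x = y" if "x \<in> B" "y \<in> B" "s a = t x \<or> s x = t a" "s a = t y \<or> s y = t a"
        "s a = t x \<longleftrightarrow> s a = t y" for x y
        using that injs injt by (metis inj_on_def)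
      have d01: "b0 \<noteq> b1" using b0 b1 Mfun by fastforce
      have d02: "b0 \<noteq> b2" using b0 b2 Mfun by fastforce
      have d12: "b1 \<noteq> b2" using b1 b2 Mfun by fastforce
      show False using eq[OF inB(1) inB(2) b0(2) b1(2)] eq[OF inB(1) inB(3) b0(2) b2(2)]
          eq[OF inB(2) inB(3) b1(2) b2(2)] d01 d02 d12 by blast
    qed
    then obtain i where i: "i \<in> {0,1,2::nat}" "i \<notin> F" by blast
    have "insert (a,i) M \<in> A"
      unfolding A_def
    proof (intro CollectI conjI allI impI)
      show "insert (a,i) M \<subseteq> B \<times> {0,1,2}" using Msub aB i by blast
    next
      fix x j k assume "(x,j) \<in> insert (a,i) M" "(x,k) \<in> insert (a,i) M"
      thus "j = k" using Mfun nc by auto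
    next
      fix x y j assume h: "(x,j) \<in> insert (a,i) M" "(y,j) \<in> insert (a,i) M"
      show "s x \<noteq> t y"
        using h Mprop i(2) assms(3)[OF aB] unfolding F_def by auto
    qed
    hence "insert (a,i) M = M" using Mmax by blast
    thus False using nc by blast
  qed
  define Bk where "Bk = (\<lambda>k. {a. (a,k) \<in> M})"
  show ?thesis
  proof (intro exI conjI)
    show "B = Bk 0 \<union> Bk 1 \<union> Bk 2"
    proof
      show "B \<subseteq> Bk 0 \<union> Bk 1 \<union> Bk 2"
      proof
        fix a assume "a \<in> B"
        then obtain i where "(a,i) \<in> M" using total by blast
        moreover hence "i \<in> {0,1,2}" using Msub by blast
        ultimately show "a \<in> Bk 0 \<union> Bk 1 \<union> Bk 2" unfolding Bk_def by auto
      qed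
      show "Bk 0 \<union> Bk 1 \<union> Bk 2 \<subseteq> B" using Msub unfolding Bk_def by blast
    qed
  qed (use Mfun Mprop in \<open>fastforce simp: Bk_def\<close>)+
qed

end
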